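(* Let $\mathcal I=(i_-,i_+)\subseteq\mathbb R$ and let $X$ be a random variable with an absolutely continuous density $f$ satisfying $f(x)>0$ for $x\in\mathcal I$. Let $F(x)=\int_{i_-}^x f(y)\,dy$, let $\bar x$ be the median ($F(\bar x)=1/2$), and define $$K(x)=\frac{F(x)}{f(x)}\ \text{ if } x\le\bar x,\qquad K(x)=\frac{1-F(x)}{f(x)}\ \text{ if } x\ge \bar x .$$ Then for every $1\le p<\infty$ and every smooth $\phi$ on $\mathcal I$ with $E[|\phi(X)|^p]<\infty$, $$E\big[|\phi(X)-E(\phi(X))|^p\big]\le (2p)^p\,E\big[K(X)^p|\phi'(X)|^p\big].$$ *)

theory Defs
  imports "HOL-Probability.Probability"
begin

definition abs_cont_on :: "(real \<Rightarrow> real) \<Rightarrow> real set \<Rightarrow> bool" where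
  "abs_cont_on f S \<longleftrightarrow>
     (\<forall>\<epsilon>>0. \<exists>\<delta>>0. \<forall>(n::nat) (l::nat \<Rightarrow> real) (r::nat \<Rightarrow> real).
        (\<forall>k<n. l k \<le> r k \<and> {l k..r k} \<subseteq> S) \<and>
        (\<forall>j<n. \<forall>k<n. j \<noteq> k \<longrightarrow> r j \<le> l k \<or> r k \<le> l j) \<and>
        (\<Sum>k<n. r k - l k) < \<delta>
        \<longrightarrow> (\<Sum>k<n. \<bar>f (r k) - f (l k)\<bar>) < \<epsilon>)"

definition smooth_on :: "(real \<Rightarrow> real) \<Rightarrow> real set \<Rightarrow> bool" where
  "smooth_on \<phi> S \<longleftrightarrow> (\<forall>n. \<forall>x\<in>S. ((deriv ^^ n) \<phi>) differentiable (at x))"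

definition cdf_of :: "ereal \<Rightarrow> (real \<Rightarrow> real) \<Rightarrow> real \<Rightarrow> real" where
  "cdf_of a f x = (LBINT y=a..ereal x. f y)"

definition K_weight :: "ereal \<Rightarrow> (real \<Rightarrow> real) \<Rightarrow> real \<Rightarrow> real \<Rightarrow> real" where
  "K_weight a f xbar x =
     (if x \<le> xbar then cdf_of a f x / f x else (1 - cdf_of a f x) / f x)"

end

theory Submission
  imports Defs
begin



lemma amgm:
  fixes f H g h p :: real
  assumes "0 < f" "0 \<le> H" "0 < g" "0 \<le> h" "1 \<le> p"
  shows "H * (p * g powr (p-1) * h) \<le> (p-1)/p * (f * g powr p) + p powr (p-1) * (f * ((H/f) powr p * h powr p))"
proof (cases "p = 1")
  case True
  then show ?thesis using assms by simp
next
  case False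
  hence p1: "p > 1" using assms by simp
  show ?thesis
  proof (cases "H = 0 \<or> h = 0")
    case True
    then show ?thesis using assms p1 by (auto intro!: add_nonneg_nonneg mult_nonneg_nonneg)
  next
    case False
    hence Hp: "H > 0" and hp: "h > 0" using assms by auto
    define a where "a = H / f"
    have ap: "a > 0" using Hp assms by (simp add: a_def)
    have Ha: "H = f * a" using assms by (simp add: a_def)
    define A where "A = f * (p * a * h) powr p"
    define B where "B = f * g powr p"
    have Ap: "A > 0" using assms ap hp p1 by (simp add: A_def)
    have Bp: "B > 0" using assms by (simp add: B_def)
    have Y: "A powr (1/p) * B powr ((p-1)/p) \<le> (1/p) * A + ((p-1)/p) * B"
      using Youngs_inequality_0[of "1/p" "(p-1)/p" A B] Ap Bp p1 by (simp add: field_simps)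
    have e1: "A powr (1/p) = f powr (1/p) * (p * a * h)"
      using assms ap hp p1 by (simp add: A_def powr_mult powr_powr)
    have e2: "B powr ((p-1)/p) = f powr ((p-1)/p) * g powr (p-1)"
      using assms p1 by (simp add: B_def powr_mult powr_powr)
    have e3: "f powr (1/p) * f powr ((p-1)/p) = f"
      using assms p1 by (simp add: powr_add[symmetric] add_divide_distrib[symmetric])
    have "H * (p * g powr (p-1) * h) = A powr (1/p) * B powr ((p-1)/p)"
      unfolding e1 e2 Ha using e3 by (simp add: algebra_simps)
    also have "\<dots> \<le> (1/p) * A + ((p-1)/p) * B" by (rule Y)
    also have "(1/p) * A = p powr (p-1) * (f * (a powr p * h powr p))"
      using assms ap hp p1 by (simp add: A_def powr_mult powr_diff field_simps)
    finally show ?thesis by (simp add: a_def B_def algebra_simps)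
  qed
qed


lemma core:
  fixes f H u u' :: "real \<Rightarrow> real" and s y p :: real
  assumes sy: "s \<le> y" and p1: "1 \<le> p"
    and cf: "continuous_on {s..y} f" and fpos: "\<And>x. x \<in> {s..y} \<Longrightarrow> 0 < f x"
    and dH: "\<And>x. x \<in> {s..y} \<Longrightarrow> (H has_real_derivative - f x) (at x within {s..y})"
    and Hnn: "\<And>x. x \<in> {s..y} \<Longrightarrow> 0 \<le> H x"
    and du: "\<And>x. x \<in> {s..y} \<Longrightarrow> (u has_real_derivative u' x) (at x within {s..y})"
    and cu': "continuous_on {s..y} u'"
  shows "integral {s..y} (\<lambda>x. f x * \<bar>u x - u s\<bar> powr p)
         \<le> p powr p * integral {s..y} (\<lambda>x. f x * ((H x / f x) powr p * \<bar>u' x\<bar> powr p))"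
proof -
  define h where "h x = \<bar>u' x\<bar>" for x
  have ch: "continuous_on {s..y} h" unfolding h_def by (intro continuous_intros cu')
  define G where "G x = integral {s..x} h" for x
  have dG: "(G has_real_derivative h x) (at x within {s..y})" if "x \<in> {s..y}" for x
    using integral_has_vector_derivative[OF ch that] unfolding G_def
    by (simp add: has_real_derivative_iff_has_vector_derivative)
  have cG: "continuous_on {s..y} G"
    using dG by (meson DERIV_continuous continuous_on_eq_continuous_within)
  have cH: "continuous_on {s..y} H"
    using dH by (meson DERIV_continuous continuous_on_eq_continuous_within)
  have cu: "continuous_on {s..y} u"
    using du by (meson DERIV_continuous continuous_on_eq_continuous_within)
  have Gnn: "0 \<le> G x" if "x \<in> {s..y}" for x
    unfolding G_def h_def using that by (intro integral_nonneg) (auto intro!: integrable_continuous_interval continuous_on_subset[OF ch[unfolded h_def]])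
  have uG: "\<bar>u x - u s\<bar> \<le> G x" if x: "x \<in> {s..y}" for x
  proof -
    have sub: "{s..x} \<subseteq> {s..y}" using x by auto
    have "(u' has_integral (u x - u s)) {s..x}"
      using x by (intro fundamental_theorem_of_calculus)
        (auto intro!: has_field_derivative_subset[OF du sub] simp: has_real_derivative_iff_has_vector_derivative[symmetric])
    hence "u x - u s = integral {s..x} u'" and iu: "u' integrable_on {s..x}" by (auto simp: has_integral_iff)
    moreover have "norm (integral {s..x} u') \<le> integral {s..x} h"
      by (rule integral_norm_bound_integral) (auto simp: h_def iu intro!: integrable_continuous_interval continuous_on_subset[OF ch[unfolded h_def] sub])
    ultimately show ?thesis by (simp add: G_def)
  qed
  define L where "L = integral {s..y} (\<lambda>x. f x * \<bar>u x - u s\<bar> powr p)"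
  define B where "B = integral {s..y} (\<lambda>x. f x * ((H x / f x) powr p * \<bar>u' x\<bar> powr p))"
  have main: "L \<le> p powr p * B + p * H s * e powr p" if ep: "e > 0" for e
  proof -
    define Ge where "Ge x = e + G x" for x
    have Gep: "0 < Ge x" if "x \<in> {s..y}" for x using Gnn[OF that] ep by (simp add: Ge_def)
    have cGe: "continuous_on {s..y} Ge" unfolding Ge_def by (intro continuous_intros cG)
    define a where "a t = f t * Ge t powr p" for t
    define b where "b t = f t * ((H t / f t) powr p * h t powr p)" for t
    have ca: "continuous_on {s..y} a" unfolding a_def
      using Gep p1 by (intro continuous_intros cf cGe continuous_on_powr') (auto, force)
    have cb: "continuous_on {s..y} b" unfolding b_def
      using fpos Hnn p1 by (intro continuous_intros cf cH ch continuous_on_powr') (auto simp: h_def, (force dest: fpos)+)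
    define \<Psi> where "\<Psi> x = integral {s..x} a / p - p powr (p-1) * integral {s..x} b + H x * Ge x powr p" for x
    define \<Psi>' where "\<Psi>' x = a x / p - p powr (p-1) * b x + (- f x * Ge x powr p + H x * (p * Ge x powr (p-1) * h x))" for x
    have dPsi: "(\<Psi> has_real_derivative \<Psi>' x) (at x within {s..y})" if x: "x \<in> {s..y}" for x
    proof -
      have da: "((\<lambda>u. integral {s..u} a) has_real_derivative a x) (at x within {s..y})"
        using integral_has_vector_derivative[OF ca x] by (simp add: has_real_derivative_iff_has_vector_derivative)
      have db: "((\<lambda>u. integral {s..u} b) has_real_derivative b x) (at x within {s..y})"
        using integral_has_vector_derivative[OF cb x] by (simp add: has_real_derivative_iff_has_vector_derivative)
      have dGe: "(Ge has_real_derivative h x) (at x within {s..y})"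
        unfolding Ge_def using dG[OF x] by (auto intro!: derivative_eq_intros)
      have dGp: "((\<lambda>x. Ge x powr p) has_real_derivative (p * Ge x powr (p-1)) * h x) (at x within {s..y})"
        by (rule DERIV_chain2[OF has_real_derivative_powr[OF Gep[OF x]] dGe])
      have "((\<lambda>x. integral {s..x} a / p - p powr (p-1) * integral {s..x} b + H x * Ge x powr p) has_real_derivative
          a x / p - p powr (p-1) * b x + (- f x * Ge x powr p + H x * (p * Ge x powr (p-1) * h x))) (at x within {s..y})"
        using DERIV_add[OF DERIV_diff[OF DERIV_cdivide[OF da, of p] DERIV_cmult[OF db, of "p powr (p-1)"]] DERIV_mult[OF dH[OF x] dGp]]
        by (simp add: algebra_simps)
      thus ?thesis unfolding \<Psi>_def \<Psi>'_def .
    qed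
    have neg: "\<Psi>' x \<le> 0" if x: "x \<in> {s..y}" for x
    proof -
      have "H x * (p * Ge x powr (p-1) * h x) \<le> (p-1)/p * (f x * Ge x powr p) + p powr (p-1) * (f x * ((H x/f x) powr p * h x powr p))"
        by (rule amgm) (use fpos[OF x] Hnn[OF x] Gep[OF x] p1 in \<open>auto simp: h_def\<close>)
      moreover have "a x / p - f x * Ge x powr p + (p-1)/p * (f x * Ge x powr p) = 0"
        using p1 by (simp add: a_def field_simps)
      ultimately show ?thesis unfolding \<Psi>'_def b_def by (simp add: algebra_simps)
    qed
    have "(\<Psi>' has_integral (\<Psi> y - \<Psi> s)) {s..y}"
      using sy dPsi by (intro fundamental_theorem_of_calculus) (auto simp: has_real_derivative_iff_has_vector_derivative[symmetric])
    hence "\<Psi> y - \<Psi> s \<le> 0"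
      using neg has_integral_le[OF _ has_integral_0] by blast
    moreover have "\<Psi> s = H s * e powr p" by (simp add: \<Psi>_def Ge_def G_def)
    ultimately have Py: "\<Psi> y \<le> H s * e powr p" by simp
    have "0 \<le> H y * Ge y powr p" using Hnn[of y] sy by simp
    with Py have A: "integral {s..y} a / p \<le> p powr (p-1) * B + H s * e powr p"
      unfolding \<Psi>_def B_def b_def h_def by linarith
    have "L \<le> integral {s..y} a"
      unfolding L_def
    proof (rule integral_le)
      show "(\<lambda>x. f x * \<bar>u x - u s\<bar> powr p) integrable_on {s..y}"
        using p1 by (intro integrable_continuous_interval continuous_intros cf cu continuous_on_powr') auto
      show "a integrable_on {s..y}" by (rule integrable_continuous_interval[OF ca])
      fix x assume x: "x \<in> {s..y}"
      have "\<bar>u x - u s\<bar> \<le> Ge x" using uG[OF x] ep by (simp add: Ge_def)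
      hence "\<bar>u x - u s\<bar> powr p \<le> Ge x powr p" using p1 by (intro powr_mono2) auto
      thus "f x * \<bar>u x - u s\<bar> powr p \<le> a x" unfolding a_def using fpos[OF x] by (simp add: mult_left_mono)
    qed
    also have "\<dots> \<le> p * (p powr (p-1) * B + H s * e powr p)"
      using A p1 by (simp add: field_simps)
    also have "\<dots> = p powr p * B + p * H s * e powr p"
      using p1 by (simp add: algebra_simps powr_diff)
    finally show ?thesis .
  qed
  have "L \<le> p powr p * B"
  proof (rule field_le_epsilon)
    fix d :: real assume d: "0 < d"
    have Hs: "0 \<le> H s" using Hnn sy by auto
    show "L \<le> p powr p * B + d"
    proof (cases "H s = 0")
      case True thus ?thesis using main[of 1] d by simp
    next
      case False
      hence Hs: "H s > 0" using Hs by simp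
      define e where "e = (d / (p * H s)) powr (1/p)"
      have e: "e > 0" using d Hs p1 by (simp add: e_def)
      have "e powr p = d / (p * H s)" using d Hs p1 by (simp add: e_def powr_powr)
      hence "p * H s * e powr p = d" using Hs p1 by simp
      thus ?thesis using main[OF e] by simp
    qed
  qed
  thus ?thesis by (simp add: L_def B_def)
qed


lemma core_left:
  fixes f F u u' :: "real \<Rightarrow> real" and s z p :: real
  assumes zs: "z \<le> s" and p1: "1 \<le> p"
    and cf: "continuous_on {z..s} f" and fpos: "\<And>x. x \<in> {z..s} \<Longrightarrow> 0 < f x"
    and dF: "\<And>x. x \<in> {z..s} \<Longrightarrow> (F has_real_derivative f x) (at x within {z..s})"
    and Fnn: "\<And>x. x \<in> {z..s} \<Longrightarrow> 0 \<le> F x"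
    and du: "\<And>x. x \<in> {z..s} \<Longrightarrow> (u has_real_derivative u' x) (at x within {z..s})"
    and cu': "continuous_on {z..s} u'"
  shows "integral {z..s} (\<lambda>x. f x * \<bar>u x - u s\<bar> powr p)
         \<le> p powr p * integral {z..s} (\<lambda>x. f x * ((F x / f x) powr p * \<bar>u' x\<bar> powr p))"
proof -
  have img: "uminus ` {-s..-z} = {z..s::real}" by auto
  have mem: "x \<in> {-s..-z} \<Longrightarrow> -x \<in> {z..s}" for x by auto
  have dneg: "(uminus has_real_derivative -1) (at x within {-s..-z})" for x :: real
    by (auto intro!: derivative_eq_intros)
  have refl: "\<And>g. (\<lambda>x. g (-x)) = g \<circ> uminus" by (auto simp: o_def)
  have "integral {-s..-z} (\<lambda>x. f (-x) * \<bar>u (-x) - u (- (-s))\<bar> powr p)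
        \<le> p powr p * integral {-s..-z} (\<lambda>x. f (-x) * ((F (-x) / f (-x)) powr p * \<bar>- u' (-x)\<bar> powr p))"
  proof (rule core[where H="\<lambda>x. F (-x)" and u="\<lambda>x. u (-x)" and u'="\<lambda>x. - u' (-x)"])
    show "-s \<le> -z" using zs by simp
    show "1 \<le> p" by fact
    show "continuous_on {-s..-z} (\<lambda>x. f (-x))"
      by (rule continuous_on_compose2[OF cf]) (auto intro!: continuous_intros)
    show "continuous_on {-s..-z} (\<lambda>x. - u' (-x))"
      by (intro continuous_intros continuous_on_compose2[OF cu']) (auto intro!: continuous_intros)
    fix x assume x: "x \<in> {-s..-z}"
    show "0 < f (-x)" using fpos[OF mem[OF x]] .
    show "0 \<le> F (-x)" using Fnn[OF mem[OF x]] .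
    show "((\<lambda>x. F (-x)) has_real_derivative - f (- x)) (at x within {-s..-z})"
      using DERIV_image_chain[OF _ dneg, of F "f (-x)"] dF[OF mem[OF x]] img
      by (simp add: o_def)
    show "((\<lambda>x. u (-x)) has_real_derivative - u' (- x)) (at x within {-s..-z})"
      using DERIV_image_chain[OF _ dneg, of u "u' (-x)"] du[OF mem[OF x]] img
      by (simp add: o_def)
  qed
  moreover have "integral {-s..-z} (\<lambda>x. f (-x) * \<bar>u (-x) - u s\<bar> powr p) = integral {z..s} (\<lambda>x. f x * \<bar>u x - u s\<bar> powr p)"
    using Henstock_Kurzweil_Integration.integral_reflect_real[of s z "\<lambda>x. f x * \<bar>u x - u s\<bar> powr p"] by simp
  moreover have "integral {-s..-z} (\<lambda>x. f (-x) * ((F (-x) / f (-x)) powr p * \<bar>u' (-x)\<bar> powr p)) = integral {z..s} (\<lambda>x. f x * ((F x / f x) powr p * \<bar>u' x\<bar> powr p))"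
    using Henstock_Kurzweil_Integration.integral_reflect_real[of s z "\<lambda>x. f x * ((F x / f x) powr p * \<bar>u' x\<bar> powr p)"] by simp
  ultimately show ?thesis by simp
qed



lemma powr_convex_nonneg:
  fixes p t x y :: real
  assumes p: "1 \<le> p" and t: "0 \<le> t" "t \<le> 1" and xy: "0 \<le> x" "0 \<le> y"
  shows "((1 - t) * x + t * y) powr p \<le> (1 - t) * x powr p + t * y powr p"
proof -
  have key: "(t * y) powr p \<le> t * y powr p" if "0 \<le> t" "t \<le> 1" "0 \<le> y" for t y :: real
  proof -
    have "t powr p \<le> t powr 1" using that p by (intro powr_mono') auto
    hence "t powr p \<le> t" using that by simp
    thus ?thesis using that by (simp add: powr_mult mult_right_mono)
  qed
  show ?thesis
  proof (cases "x = 0 \<or> y = 0")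
    case True
    then show ?thesis
    proof
      assume "x = 0" thus ?thesis using key[of t y] t xy p by simp
    next
      assume "y = 0" thus ?thesis using key[of "1-t" x] t xy p by simp
    qed
  next
    case False
    hence "x > 0" "y > 0" using xy by auto
    thus ?thesis using convex_onD[OF powr_convex[OF p], of t x y] t by simp
  qed
qed

lemma abs_powr_convex:
  fixes p :: real assumes p: "1 \<le> p"
  shows "convex_on UNIV (\<lambda>x::real. \<bar>x\<bar> powr p)"
proof (rule convex_onI)
  fix t x y :: real assume t: "0 < t" "t < 1"
  have "\<bar>(1 - t) *\<^sub>R x + t *\<^sub>R y\<bar> \<le> (1 - t) * \<bar>x\<bar> + t * \<bar>y\<bar>"
    using t by (simp add: abs_mult order_trans[OF abs_triangle_ineq])
  hence "\<bar>(1 - t) *\<^sub>R x + t *\<^sub>R y\<bar> powr p \<le> ((1 - t) * \<bar>x\<bar> + t * \<bar>y\<bar>) powr p"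
    using p by (intro powr_mono2) auto
  also have "\<dots> \<le> (1 - t) * \<bar>x\<bar> powr p + t * \<bar>y\<bar> powr p"
    using t p by (intro powr_convex_nonneg) auto
  finally show "\<bar>(1 - t) *\<^sub>R x + t *\<^sub>R y\<bar> powr p \<le> (1 - t) * \<bar>x\<bar> powr p + t * \<bar>y\<bar> powr p" .
qed auto

lemma abs_add_powr:
  fixes p u v :: real assumes p: "1 \<le> p"
  shows "\<bar>u + v\<bar> powr p \<le> 2 powr (p - 1) * (\<bar>u\<bar> powr p + \<bar>v\<bar> powr p)"
proof -
  have "\<bar>u + v\<bar> powr p \<le> (1/2) * (2 powr p * \<bar>u\<bar> powr p) + (1/2) * (2 powr p * \<bar>v\<bar> powr p)"
    using convex_onD[OF abs_powr_convex[OF p], of "1/2" "2 * u" "2 * v"] by (simp add: abs_mult powr_mult algebra_simps)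
  also have "\<dots> = 2 powr (p - 1) * (\<bar>u\<bar> powr p + \<bar>v\<bar> powr p)"
    by (simp add: powr_diff field_simps)
  finally show ?thesis .
qed

lemma center:
  fixes M :: "'a measure" and Y :: "'a \<Rightarrow> real" and p c :: real
  assumes P: "prob_space M" and Ym[measurable]: "Y \<in> borel_measurable M" and p: "1 \<le> p"
    and fin: "(\<integral>\<^sup>+\<omega>. ennreal (\<bar>Y \<omega>\<bar> powr p) \<partial>M) < \<infinity>"
  shows "(\<integral>\<^sup>+\<omega>. ennreal (\<bar>Y \<omega> - (\<integral>\<omega>'. Y \<omega>' \<partial>M)\<bar> powr p) \<partial>M)
         \<le> ennreal (2 powr p) * (\<integral>\<^sup>+\<omega>. ennreal (\<bar>Y \<omega> - c\<bar> powr p) \<partial>M)"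
proof -
  interpret prob_space M by fact
  have intYp: "integrable M (\<lambda>\<omega>. \<bar>Y \<omega>\<bar> powr p)"
    by (rule integrableI_bounded) (use fin in auto)
  have intY: "integrable M Y"
  proof (rule Bochner_Integration.integrable_bound[OF Bochner_Integration.integrable_add[OF integrable_const[of 1] intYp]])
    show "AE x in M. norm (Y x) \<le> norm (1 + \<bar>Y x\<bar> powr p)"
    proof (rule AE_I2)
      fix x
      show "norm (Y x) \<le> norm (1 + \<bar>Y x\<bar> powr p)"
      proof (cases "\<bar>Y x\<bar> \<le> 1")
        case True thus ?thesis using powr_ge_zero[of "\<bar>Y x\<bar>" p] by (simp del: powr_ge_zero)
      next
        case False
        hence "\<bar>Y x\<bar> powr 1 \<le> \<bar>Y x\<bar> powr p" using p by (intro powr_mono) auto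
        thus ?thesis using False by simp
      qed
    qed
  qed simp
  define Z where "Z \<omega> = Y \<omega> - c" for \<omega>
  have Zm[measurable]: "Z \<in> borel_measurable M" unfolding Z_def by measurable
  have intZ: "integrable M Z" unfolding Z_def using intY by simp
  have intZp: "integrable M (\<lambda>\<omega>. \<bar>Z \<omega>\<bar> powr p)"
  proof (rule Bochner_Integration.integrable_bound[OF Bochner_Integration.integrable_mult_right[OF Bochner_Integration.integrable_add[OF intYp integrable_const[of "\<bar>-c\<bar> powr p"]], of "2 powr (p-1)"]])
    show "AE x in M. norm (\<bar>Z x\<bar> powr p) \<le> norm (2 powr (p - 1) * (\<bar>Y x\<bar> powr p + \<bar>- c\<bar> powr p))"
      using abs_add_powr[OF p, of "Y _" "-c"] by (auto simp: Z_def)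
  qed simp
  have EZ: "(\<integral>\<omega>. Z \<omega> \<partial>M) = (\<integral>\<omega>. Y \<omega> \<partial>M) - c"
    unfolding Z_def using intY by (simp add: prob_space)
  have jen: "\<bar>\<integral>\<omega>. Z \<omega> \<partial>M\<bar> powr p \<le> (\<integral>\<omega>. \<bar>Z \<omega>\<bar> powr p \<partial>M)"
    using jensens_inequality[OF intZ _ _ intZp abs_powr_convex[OF p], of 0 0] by simp
  define m where "m = (\<integral>\<omega>. Z \<omega> \<partial>M)"
  have pt: "\<bar>Y \<omega> - (\<integral>\<omega>'. Y \<omega>' \<partial>M)\<bar> powr p \<le> 2 powr (p - 1) * (\<bar>Z \<omega>\<bar> powr p + \<bar>-m\<bar> powr p)" for \<omega>
  proof -
    have "Y \<omega> - (\<integral>\<omega>'. Y \<omega>' \<partial>M) = Z \<omega> + - m" unfolding m_def EZ by (simp add: Z_def)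
    thus ?thesis using abs_add_powr[OF p, of "Z \<omega>" "- m"] by simp
  qed
  have "(\<integral>\<^sup>+\<omega>. ennreal (\<bar>Y \<omega> - (\<integral>\<omega>'. Y \<omega>' \<partial>M)\<bar> powr p) \<partial>M)
        \<le> (\<integral>\<^sup>+\<omega>. ennreal (2 powr (p - 1) * (\<bar>Z \<omega>\<bar> powr p + \<bar>-m\<bar> powr p)) \<partial>M)"
    by (intro nn_integral_mono ennreal_leI pt)
  also have "\<dots> = ennreal (\<integral>\<omega>. 2 powr (p - 1) * (\<bar>Z \<omega>\<bar> powr p + \<bar>-m\<bar> powr p) \<partial>M)"
    by (intro nn_integral_eq_integral Bochner_Integration.integrable_mult_right Bochner_Integration.integrable_add intZp integrable_const AE_I2) auto
  also have "(\<integral>\<omega>. 2 powr (p - 1) * (\<bar>Z \<omega>\<bar> powr p + \<bar>-m\<bar> powr p) \<partial>M)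
      = 2 powr (p - 1) * ((\<integral>\<omega>. \<bar>Z \<omega>\<bar> powr p \<partial>M) + \<bar>m\<bar> powr p)"
    using intZp by (simp add: prob_space)
  also have "\<dots> \<le> 2 powr (p - 1) * (2 * (\<integral>\<omega>. \<bar>Z \<omega>\<bar> powr p \<partial>M))"
    using jen by (simp add: m_def)
  also have "\<dots> = 2 powr p * (\<integral>\<omega>. \<bar>Z \<omega>\<bar> powr p \<partial>M)"
    by (simp add: powr_diff)
  finally have "(\<integral>\<^sup>+\<omega>. ennreal (\<bar>Y \<omega> - (\<integral>\<omega>'. Y \<omega>' \<partial>M)\<bar> powr p) \<partial>M)
        \<le> ennreal (2 powr p * (\<integral>\<omega>. \<bar>Z \<omega>\<bar> powr p \<partial>M))" by (simp add: ennreal_leI)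
  also have "\<dots> = ennreal (2 powr p) * ennreal (\<integral>\<omega>. \<bar>Z \<omega>\<bar> powr p \<partial>M)"
    by (intro ennreal_mult integral_nonneg_AE AE_I2) auto
  also have "ennreal (\<integral>\<omega>. \<bar>Z \<omega>\<bar> powr p \<partial>M) = (\<integral>\<^sup>+\<omega>. ennreal (\<bar>Z \<omega>\<bar> powr p) \<partial>M)"
    by (intro nn_integral_eq_integral[symmetric] intZp AE_I2) auto
  finally show ?thesis by (simp add: Z_def)
qed



lemma abs_cont_imp_cont:
  assumes "abs_cont_on f {c..d}"
  shows "continuous_on {c..d} f"
proof -
  have "uniformly_continuous_on {c..d} f"
    unfolding uniformly_continuous_on_def
  proof (intro allI impI)
    fix e :: real assume e: "0 < e"
    obtain \<delta> where \<delta>: "\<delta> > 0" and H: "\<forall>(n::nat) (l::nat\<Rightarrow>real) (r::nat\<Rightarrow>real). (\<forall>k<n. l k \<le> r k \<and> {l k..r k} \<subseteq> {c..d}) \<and>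
        (\<forall>j<n. \<forall>k<n. j \<noteq> k \<longrightarrow> r j \<le> l k \<or> r k \<le> l j) \<and> (\<Sum>k<n. r k - l k) < \<delta>
        \<longrightarrow> (\<Sum>k<n. \<bar>f (r k) - f (l k)\<bar>) < e"
      using assms e unfolding abs_cont_on_def by blast
    show "\<exists>d'>0. \<forall>x\<in>{c..d}. \<forall>x'\<in>{c..d}. dist x' x < d' \<longrightarrow> dist (f x') (f x) < e"
    proof (intro exI[of _ \<delta>] conjI ballI impI \<delta>)
      fix x x' assume x: "x \<in> {c..d}" and x': "x' \<in> {c..d}" and dx: "dist x' x < \<delta>"
      have "\<bar>f (max x x') - f (min x x')\<bar> < e"
        using H[rule_format, of 1 "\<lambda>_. min x x'" "\<lambda>_. max x x'"] x x' dx by (auto simp: dist_real_def lessThan_Suc max_def min_def split: if_splits)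
      thus "dist (f x') (f x) < e" by (auto simp: dist_real_def max_def min_def abs_minus_commute split: if_splits)
    qed
  qed
  thus ?thesis by (rule uniformly_continuous_imp_continuous)
qed

lemma nn_conv:
  fixes g :: "real \<Rightarrow> real"
  assumes "g integrable_on {s..y}" "\<And>x. x \<in> {s..y} \<Longrightarrow> 0 \<le> g x"
  shows "(\<integral>\<^sup>+x. ennreal (indicator {s..y} x * g x) \<partial>lborel) = ennreal (integral {s..y} g)"
  using nn_integral_has_integral_lebesgue[of "{s..y}" g "integral {s..y} g"] assms by auto

lemma exhaust_le:
  fixes P :: "real \<Rightarrow> real" and S :: "nat \<Rightarrow> real set"
  assumes Pm[measurable]: "P \<in> borel_measurable borel" and Pnn: "\<And>x. 0 \<le> P x"
    and Sm[measurable]: "\<And>n. S n \<in> sets borel" and inc: "incseq S" and cov: "\<And>x. x \<in> T \<Longrightarrow> \<exists>n. x \<in> S n"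
    and bnd: "\<And>n. (\<integral>\<^sup>+x. ennreal (P x * indicator (S n) x) \<partial>lborel) \<le> C"
  shows "(\<integral>\<^sup>+x. ennreal (P x * indicator T x) \<partial>lborel) \<le> C"
proof -
  have "(\<integral>\<^sup>+x. ennreal (P x * indicator T x) \<partial>lborel) \<le> (\<integral>\<^sup>+x. (SUP n. ennreal (P x * indicator (S n) x)) \<partial>lborel)"
  proof (rule nn_integral_mono)
    fix x
    show "ennreal (P x * indicator T x) \<le> (SUP n. ennreal (P x * indicator (S n) x))"
    proof (cases "x \<in> T")
      case True
      then obtain n where "x \<in> S n" using cov by blast
      hence "ennreal (P x * indicator T x) = ennreal (P x * indicator (S n) x)" using True by simp
      thus ?thesis by (metis SUP_upper UNIV_I)
    qed simp
  qed
  also have "\<dots> = (SUP n. (\<integral>\<^sup>+x. ennreal (P x * indicator (S n) x) \<partial>lborel))"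
  proof (rule nn_integral_monotone_convergence_SUP)
    show "incseq (\<lambda>n x. ennreal (P x * indicator (S n) x))"
      using inc Pnn by (auto simp: incseq_def le_fun_def intro!: ennreal_leI mult_left_mono split: split_indicator)
  qed measurable
  also have "\<dots> \<le> C" by (rule SUP_least) (rule bnd)
  finally show ?thesis .
qed


theorem theorem4p1:
  fixes M :: "'a measure" and X :: "'a \<Rightarrow> real" and f :: "real \<Rightarrow> real"
    and a b :: ereal and xbar p :: real and \<phi> :: "real \<Rightarrow> real"
  assumes "prob_space M"
    and "a < b"
    and "distributed M lborel X (\<lambda>x. ennreal (f x))"
    and "\<forall>x. a < ereal x \<and> ereal x < b \<longrightarrow> f x > 0"
    and "\<forall>x. \<not> (a < ereal x \<and> ereal x < b) \<longrightarrow> f x = 0"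
    and "\<forall>c d. a < ereal c \<and> ereal d < b \<longrightarrow> abs_cont_on f {c..d}"
    and "a < ereal xbar" and "ereal xbar < b" and "cdf_of a f xbar = 1/2"
    and "1 \<le> p"
    and "smooth_on \<phi> {x. a < ereal x \<and> ereal x < b}"
    and "(\<lambda>\<omega>. \<phi> (X \<omega>)) \<in> borel_measurable M"
    and "(\<integral>\<^sup>+\<omega>. ennreal (\<bar>\<phi> (X \<omega>)\<bar> powr p) \<partial>M) < \<infinity>"
  shows "(\<integral>\<^sup>+\<omega>. ennreal (\<bar>\<phi> (X \<omega>) - (\<integral>\<omega>'. \<phi> (X \<omega>') \<partial>M)\<bar> powr p) \<partial>M)
         \<le> ennreal ((2 * p) powr p) *
           (\<integral>\<^sup>+\<omega>. ennreal (K_weight a f xbar (X \<omega>) powr p * \<bar>deriv \<phi> (X \<omega>)\<bar> powr p) \<partial>M)"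
proof -
  note P = assms(1) and dist = assms(3) and p1 = assms(10)
  interpret P: prob_space M by fact
  define I where "I = einterval a b"
  have I_iff: "x \<in> I \<longleftrightarrow> a < ereal x \<and> ereal x < b" for x by (simp add: I_def einterval_iff)
  have openI: "open I" by (simp add: I_def)
  have Iborel[measurable]: "I \<in> sets borel" using openI by simp
  have fpos: "x \<in> I \<Longrightarrow> 0 < f x" for x using assms(4) I_iff by blast
  have f0: "x \<notin> I \<Longrightarrow> f x = 0" for x using assms(5) I_iff by blast
  have fnn: "0 \<le> f x" for x using fpos f0 by (cases "x \<in> I") (auto simp: less_imp_le)
  have xbarI: "xbar \<in> I" using assms(7,8) I_iff by blast
  have box: "\<exists>c d. c < x \<and> x < d \<and> {c..d} \<subseteq> I" if "x \<in> I" for x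
  proof -
    from openI that obtain e where e: "e > 0" "ball x e \<subseteq> I" by (rule openE)
    have "{x - e/2..x + e/2} \<subseteq> ball x e"
    proof
      fix y assume "y \<in> {x - e/2..x + e/2}"
      hence "dist x y < e" using e(1) unfolding dist_real_def abs_less_iff by auto
      thus "y \<in> ball x e" by simp
    qed
    hence sub: "{x - e/2..x + e/2} \<subseteq> I" using e(2) by (rule order_trans)
    have "x - e/2 < x \<and> x < x + e/2 \<and> {x - e/2..x + e/2} \<subseteq> I" using e(1) sub by simp
    thus ?thesis by blast
  qed
  have ccI: "c \<in> I \<Longrightarrow> d \<in> I \<Longrightarrow> {c..d} \<subseteq> I" for c d
  proof
    fix x assume "c \<in> I" "d \<in> I" "x \<in> {c..d}"
    hence "a < ereal c" "ereal d < b" "ereal c \<le> ereal x" "ereal x \<le> ereal d" by (auto simp: I_iff)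
    thus "x \<in> I" unfolding I_iff by (meson less_le_trans le_less_trans)
  qed
  have cfcd: "continuous_on {c..d} f" if "c \<in> I" "d \<in> I" for c d
    using assms(6) that I_iff abs_cont_imp_cont by blast
  have cf: "continuous_on I f"
  proof -
    have "isCont f x" if x: "x \<in> I" for x
    proof -
      obtain c d where cd: "c < x" "x < d" "{c..d} \<subseteq> I" using box[OF x] by blast
      have "c \<in> I" "d \<in> I" using cd by auto
      hence "continuous_on {c..d} f" by (rule cfcd)
      thus ?thesis using cd by (intro continuous_on_interior[of "{c..d}"]) auto
    qed
    thus ?thesis by (simp add: continuous_at_imp_continuous_on)
  qed
  have Xm[measurable]: "X \<in> measurable M lborel" using distributed_measurable[OF dist] .
  have fm[measurable]: "f \<in> borel_measurable borel"
  proof -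
    have "(\<lambda>x. indicator I x *\<^sub>R f x) \<in> borel_measurable borel"
      by (rule borel_measurable_continuous_on_indicator[OF Iborel cf])
    moreover have "(\<lambda>x. indicator I x *\<^sub>R f x) = f" using f0 by (auto simp: fun_eq_iff split: split_indicator)
    ultimately show ?thesis by simp
  qed
  have nnf: "(\<integral>\<^sup>+x. ennreal (f x) \<partial>lborel) = 1"
    using distributed_emeasure[OF dist, of UNIV] P.emeasure_space_1 by simp
  have intf: "integrable lborel f"
    by (rule integrableI_bounded) (use nnf fnn in auto)
  have intind: "integrable lborel (\<lambda>x. indicator S x * f x)" if "S \<in> sets borel" for S
    using integrable_mult_indicator[of S lborel f] that intf by simp
  have int1: "integral\<^sup>L lborel f = 1"
    using nn_integral_eq_integral[OF intf] nnf fnn by simp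
  have iint: "interval_lebesgue_integrable lborel u v f" for u v
  proof -
    have "einterval u' v' \<in> sets lborel" for u' v' by (simp add: borel_open)
    from integrable_mult_indicator[OF this intf] show ?thesis
      unfolding interval_lebesgue_integrable_def set_integrable_def by simp
  qed
  define F where "F = cdf_of a f"
  have F01: "0 \<le> F x \<and> F x \<le> 1" if x: "x \<in> I" for x
  proof -
    have ax: "a \<le> ereal x" using x I_iff by (simp add: less_imp_le)
    have "F x = integral\<^sup>L lborel (\<lambda>t. indicator (einterval a x) t *\<^sub>R f t)"
      unfolding F_def cdf_of_def interval_lebesgue_integral_le_eq[OF ax] set_lebesgue_integral_def ..
    moreover have "integral\<^sup>L lborel (\<lambda>t. indicator (einterval a x) t *\<^sub>R f t) \<le> integral\<^sup>L lborel f"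
      using intf fnn by (intro integral_mono integrable_mult_indicator) (auto split: split_indicator)
    moreover have "0 \<le> integral\<^sup>L lborel (\<lambda>t. indicator (einterval a x) t *\<^sub>R f t)"
      using fnn by (intro Bochner_Integration.integral_nonneg) (auto split: split_indicator)
    ultimately show ?thesis using int1 by simp
  qed
  have Fsplit: "F x = F c + integral {c..x} f" if "c \<le> x" for c x
  proof -
    have "F c + (LBINT t=ereal c..ereal x. f t) = F x"
      unfolding F_def cdf_of_def by (rule interval_integral_sum[OF iint])
    moreover have "(LBINT t=ereal c..ereal x. f t) = integral {c..x} f"
      using that intind by (intro interval_integral_eq_integral) (auto simp: set_integrable_def)
    ultimately show ?thesis by simp
  qed
  have dF: "(F has_real_derivative f x) (at x)" if x: "x \<in> I" for x
  proof -
    obtain c d where cd: "c < x" "x < d" "{c..d} \<subseteq> I" using box[OF x] by blast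
    have "c \<in> I" "d \<in> I" using cd by auto
    hence cfc: "continuous_on {c..d} f" by (rule cfcd)
    have "((\<lambda>u. F c + integral {c..u} f) has_real_derivative f x) (at x within {c..d})"
      using integral_has_vector_derivative[OF cfc, of x] cd
      by (auto simp: has_real_derivative_iff_has_vector_derivative intro!: derivative_eq_intros)
    hence "((\<lambda>u. F c + integral {c..u} f) has_real_derivative f x) (at x)"
      using cd by (simp add: at_within_Icc_at)
    thus ?thesis
      by (rule has_field_derivative_transform_within_open[of _ _ _ "{c<..<d}"]) (use cd in simp, use cd in simp, metis Fsplit less_imp_le greaterThanLessThan_iff)
  qed
  have cF: "continuous_on I F"
    using dF by (intro continuous_at_imp_continuous_on ballI) (auto intro: DERIV_isCont)
  have sm: "\<forall>x\<in>{x. a < ereal x \<and> ereal x < b}. (deriv ^^ n) \<phi> differentiable (at x)" for n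
    using assms(11) unfolding smooth_on_def by blast
  have phidiff: "\<phi> differentiable (at x)" if "x \<in> I" for x
    using sm[of 0] that I_iff by simp
  have dphidiff: "deriv \<phi> differentiable (at x)" if "x \<in> I" for x
    using sm[of 1] that I_iff by simp
  have dphi: "(\<phi> has_real_derivative deriv \<phi> x) (at x)" if "x \<in> I" for x
    using phidiff[OF that] DERIV_deriv_iff_real_differentiable by blast
  have cphi: "continuous_on I \<phi>"
    by (intro continuous_at_imp_continuous_on ballI differentiable_imp_continuous_within phidiff)
  have cdphi: "continuous_on I (deriv \<phi>)"
    by (intro continuous_at_imp_continuous_on ballI differentiable_imp_continuous_within dphidiff)
  define phih where "phih x = indicator I x * \<phi> x" for x
  define Dh where "Dh x = indicator I x * deriv \<phi> x" for x
  define Fh where "Fh x = indicator I x * F x" for x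
  have phihm[measurable]: "phih \<in> borel_measurable borel"
    using borel_measurable_continuous_on_indicator[OF Iborel cphi] by (simp add: phih_def[abs_def])
  have Dhm[measurable]: "Dh \<in> borel_measurable borel"
    using borel_measurable_continuous_on_indicator[OF Iborel cdphi] by (simp add: Dh_def[abs_def])
  have Fhm[measurable]: "Fh \<in> borel_measurable borel"
    using borel_measurable_continuous_on_indicator[OF Iborel cF] by (simp add: Fh_def[abs_def])
  define Kh where "Kh x = (if x \<le> xbar then Fh x / f x else (indicator I x - Fh x) / f x)" for x
  have Khm[measurable]: "Kh \<in> borel_measurable borel" unfolding Kh_def[abs_def] by measurable
  have KhK: "Kh x = K_weight a f xbar x" if "x \<in> I" for x
    using that by (simp add: Kh_def Fh_def K_weight_def F_def)
  define c where "c = \<phi> xbar"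
  define Pf where "Pf x = f x * \<bar>phih x - c\<bar> powr p" for x
  define Qf where "Qf x = f x * (Kh x powr p * \<bar>Dh x\<bar> powr p)" for x
  have Pfm[measurable]: "Pf \<in> borel_measurable borel" unfolding Pf_def[abs_def] by measurable
  have Qfm[measurable]: "Qf \<in> borel_measurable borel" unfolding Qf_def[abs_def] by measurable
  have Pfnn: "0 \<le> Pf x" for x unfolding Pf_def using fnn by simp
  have Qfnn: "0 \<le> Qf x" for x unfolding Qf_def using fnn by simp
  have Pf0: "x \<notin> I \<Longrightarrow> Pf x = 0" for x unfolding Pf_def using f0 by simp
  have Fx: "F xbar = 1/2" using assms(9) by (simp add: F_def)
  have p0: "0 < p" using p1 by simp
  have segR: "(\<integral>\<^sup>+x. ennreal (Pf x * indicator {xbar..y} x) \<partial>lborel)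
      \<le> ennreal (p powr p) * (\<integral>\<^sup>+x. ennreal (Qf x * indicator {xbar..y} x) \<partial>lborel)"
    if y: "xbar \<le> y" "y \<in> I" for y
  proof -
    have sub: "{xbar..y} \<subseteq> I" using ccI[OF xbarI y(2)] .
    define Pc where "Pc x = f x * \<bar>\<phi> x - \<phi> xbar\<bar> powr p" for x
    define Qc where "Qc x = f x * (((1 - F x) / f x) powr p * \<bar>deriv \<phi> x\<bar> powr p)" for x
    have cfs: "continuous_on {xbar..y} f" using cfcd[OF xbarI y(2)] .
    have fps: "x \<in> {xbar..y} \<Longrightarrow> 0 < f x" for x using sub fpos by blast
    have Hs: "0 \<le> 1 - F x" if "x \<in> {xbar..y}" for x
    proof -
      have "x \<in> I" using sub that by blast
      thus ?thesis using F01[of x] by linarith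
    qed
    have core1: "integral {xbar..y} Pc \<le> p powr p * integral {xbar..y} Qc"
      unfolding Pc_def Qc_def
    proof (rule core[OF y(1) p1 cfs fps])
      fix x assume x: "x \<in> {xbar..y}"
      hence xI: "x \<in> I" using sub by blast
      show "((\<lambda>x. 1 - F x) has_real_derivative - f x) (at x within {xbar..y})"
      proof -
        have "((\<lambda>x. 1 - F x) has_real_derivative 0 - f x) (at x)" by (rule DERIV_diff[OF DERIV_const dF[OF xI]])
        hence "((\<lambda>x. 1 - F x) has_real_derivative - f x) (at x)" by simp
        thus ?thesis by (rule has_field_derivative_at_within)
      qed
      show "0 \<le> 1 - F x" using Hs[OF x] .
      show "(\<phi> has_real_derivative deriv \<phi> x) (at x within {xbar..y})"
        using dphi[OF xI] by (rule has_field_derivative_at_within)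
    next
      show "continuous_on {xbar..y} (deriv \<phi>)" using continuous_on_subset[OF cdphi sub] .
    qed
    have cPc: "continuous_on {xbar..y} Pc" unfolding Pc_def
      using p0 by (intro continuous_intros cfs continuous_on_powr' continuous_on_subset[OF cphi sub]) auto
    have cQc: "continuous_on {xbar..y} Qc" unfolding Qc_def
      using p0 fps Hs by (intro continuous_intros cfs continuous_on_powr' continuous_on_subset[OF cdphi sub] continuous_on_subset[OF cF sub]) (auto, (force dest: fps)+)
    have "(\<integral>\<^sup>+x. ennreal (Pf x * indicator {xbar..y} x) \<partial>lborel) = (\<integral>\<^sup>+x. ennreal (indicator {xbar..y} x * Pc x) \<partial>lborel)"
      by (intro nn_integral_cong) (use sub in \<open>auto simp: Pf_def Pc_def phih_def c_def split: split_indicator\<close>)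
    also have "\<dots> = ennreal (integral {xbar..y} Pc)"
      by (rule nn_conv[OF integrable_continuous_interval[OF cPc]]) (simp add: Pc_def fnn)
    also have "\<dots> \<le> ennreal (p powr p * integral {xbar..y} Qc)" using core1 by (rule ennreal_leI)
    also have "\<dots> = ennreal (p powr p) * ennreal (integral {xbar..y} Qc)"
    proof (rule ennreal_mult)
      show "0 \<le> integral {xbar..y} Qc"
        by (rule integral_nonneg[OF integrable_continuous_interval[OF cQc]]) (simp add: Qc_def fnn)
    qed simp
    also have "ennreal (integral {xbar..y} Qc) = (\<integral>\<^sup>+x. ennreal (indicator {xbar..y} x * Qc x) \<partial>lborel)"
      by (rule nn_conv[OF integrable_continuous_interval[OF cQc], symmetric]) (simp add: Qc_def fnn)
    also have "(\<integral>\<^sup>+x. ennreal (indicator {xbar..y} x * Qc x) \<partial>lborel) = (\<integral>\<^sup>+x. ennreal (Qf x * indicator {xbar..y} x) \<partial>lborel)"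
    proof (intro nn_integral_cong)
      fix x
      show "ennreal (indicator {xbar..y} x * Qc x) = ennreal (Qf x * indicator {xbar..y} x)"
      proof (cases "x \<in> {xbar..y}")
        case True
        hence xI: "x \<in> I" using sub by blast
        have "Kh x = (1 - F x) / f x" using True xI Fx by (auto simp: Kh_def Fh_def)
        thus ?thesis using True xI by (simp add: Qf_def Qc_def Dh_def)
      qed simp
    qed
    finally show ?thesis .
  qed
  have segL: "(\<integral>\<^sup>+x. ennreal (Pf x * indicator {z..xbar} x) \<partial>lborel)
      \<le> ennreal (p powr p) * (\<integral>\<^sup>+x. ennreal (Qf x * indicator {z..xbar} x) \<partial>lborel)"
    if z: "z \<le> xbar" "z \<in> I" for z
  proof -
    have sub: "{z..xbar} \<subseteq> I" using ccI[OF z(2) xbarI] .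
    define Pc where "Pc x = f x * \<bar>\<phi> x - \<phi> xbar\<bar> powr p" for x
    define Qc where "Qc x = f x * ((F x / f x) powr p * \<bar>deriv \<phi> x\<bar> powr p)" for x
    have cfs: "continuous_on {z..xbar} f" using cfcd[OF z(2) xbarI] .
    have fps: "x \<in> {z..xbar} \<Longrightarrow> 0 < f x" for x using sub fpos by blast
    have Fs: "0 \<le> F x" if "x \<in> {z..xbar}" for x
    proof -
      have "x \<in> I" using sub that by blast
      thus ?thesis using F01[of x] by linarith
    qed
    have core1: "integral {z..xbar} Pc \<le> p powr p * integral {z..xbar} Qc"
      unfolding Pc_def Qc_def
    proof (rule core_left[OF z(1) p1 cfs fps])
      fix x assume x: "x \<in> {z..xbar}"
      hence xI: "x \<in> I" using sub by blast
      show "(F has_real_derivative f x) (at x within {z..xbar})"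
        using dF[OF xI] by (rule has_field_derivative_at_within)
      show "0 \<le> F x" using Fs[OF x] .
      show "(\<phi> has_real_derivative deriv \<phi> x) (at x within {z..xbar})"
        using dphi[OF xI] by (rule has_field_derivative_at_within)
    next
      show "continuous_on {z..xbar} (deriv \<phi>)" using continuous_on_subset[OF cdphi sub] .
    qed
    have cPc: "continuous_on {z..xbar} Pc" unfolding Pc_def
      using p0 by (intro continuous_intros cfs continuous_on_powr' continuous_on_subset[OF cphi sub]) auto
    have cQc: "continuous_on {z..xbar} Qc" unfolding Qc_def
      using p0 fps Fs by (intro continuous_intros cfs continuous_on_powr' continuous_on_subset[OF cdphi sub] continuous_on_subset[OF cF sub]) (auto, (force dest: fps)+)
    have "(\<integral>\<^sup>+x. ennreal (Pf x * indicator {z..xbar} x) \<partial>lborel) = (\<integral>\<^sup>+x. ennreal (indicator {z..xbar} x * Pc x) \<partial>lborel)"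
      by (intro nn_integral_cong) (use sub in \<open>auto simp: Pf_def Pc_def phih_def c_def split: split_indicator\<close>)
    also have "\<dots> = ennreal (integral {z..xbar} Pc)"
      by (rule nn_conv[OF integrable_continuous_interval[OF cPc]]) (simp add: Pc_def fnn)
    also have "\<dots> \<le> ennreal (p powr p * integral {z..xbar} Qc)" using core1 by (rule ennreal_leI)
    also have "\<dots> = ennreal (p powr p) * ennreal (integral {z..xbar} Qc)"
    proof (rule ennreal_mult)
      show "0 \<le> integral {z..xbar} Qc"
        by (rule integral_nonneg[OF integrable_continuous_interval[OF cQc]]) (simp add: Qc_def fnn)
    qed simp
    also have "ennreal (integral {z..xbar} Qc) = (\<integral>\<^sup>+x. ennreal (indicator {z..xbar} x * Qc x) \<partial>lborel)"
      by (rule nn_conv[OF integrable_continuous_interval[OF cQc], symmetric]) (simp add: Qc_def fnn)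
    also have "(\<integral>\<^sup>+x. ennreal (indicator {z..xbar} x * Qc x) \<partial>lborel) = (\<integral>\<^sup>+x. ennreal (Qf x * indicator {z..xbar} x) \<partial>lborel)"
    proof (intro nn_integral_cong)
      fix x
      show "ennreal (indicator {z..xbar} x * Qc x) = ennreal (Qf x * indicator {z..xbar} x)"
      proof (cases "x \<in> {z..xbar}")
        case True
        hence xI: "x \<in> I" using sub by blast
        have "Kh x = F x / f x" using True xI by (auto simp: Kh_def Fh_def)
        thus ?thesis using True xI by (simp add: Qf_def Qc_def Dh_def)
      qed simp
    qed
    finally show ?thesis .
  qed
  define R where "R = I \<inter> {xbar..}"
  define Lc where "Lc = I \<inter> {..xbar}"
  define Lo where "Lo = I \<inter> {..<xbar}"
  have [measurable]: "R \<in> sets borel" "Lc \<in> sets borel" "Lo \<in> sets borel"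
    by (auto simp: R_def Lc_def Lo_def)
  have partR: "(\<integral>\<^sup>+x. ennreal (Pf x * indicator R x) \<partial>lborel)
      \<le> ennreal (p powr p) * (\<integral>\<^sup>+x. ennreal (Qf x * indicator R x) \<partial>lborel)"
  proof -
    obtain y :: "nat \<Rightarrow> real" where y: "incseq y" "\<And>i. ereal xbar < y i" "\<And>i. y i < b" "y \<longlonglongrightarrow> b"
      using ereal_incseq_approx[OF assms(8)] by blast
    have yI: "y i \<in> I" for i using y(2)[of i] y(3)[of i] assms(7) I_iff by (meson less_trans)
    have yx: "xbar \<le> y i" for i using y(2)[of i] by simp
    show ?thesis
    proof (rule exhaust_le[OF Pfm Pfnn, of "\<lambda>n. {xbar..y n}"])
      show "incseq (\<lambda>n. {xbar..y n})" using y(1) by (auto simp: incseq_def intro: order_trans)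
    next
      fix x assume "x \<in> R"
      hence x: "xbar \<le> x" "ereal x < b" by (auto simp: R_def I_iff)
      have "eventually (\<lambda>n. ereal x < ereal (y n)) sequentially" by (rule order_tendstoD(1)[OF y(4) x(2)])
      then obtain n where "ereal x < ereal (y n)" by (auto simp: eventually_sequentially)
      hence "x \<in> {xbar..y n}" using x by simp
      thus "\<exists>n. x \<in> {xbar..y n}" by blast
    next
      fix n
      have sub: "{xbar..y n} \<subseteq> R" using ccI[OF xbarI yI[of n]] by (auto simp: R_def)
      have "(\<integral>\<^sup>+x. ennreal (Pf x * indicator {xbar..y n} x) \<partial>lborel)
          \<le> ennreal (p powr p) * (\<integral>\<^sup>+x. ennreal (Qf x * indicator {xbar..y n} x) \<partial>lborel)"
        by (rule segR[OF yx yI])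
      also have "\<dots> \<le> ennreal (p powr p) * (\<integral>\<^sup>+x. ennreal (Qf x * indicator R x) \<partial>lborel)"
        using sub Qfnn by (intro mult_left_mono nn_integral_mono ennreal_leI) (auto split: split_indicator)
      finally show "(\<integral>\<^sup>+x. ennreal (Pf x * indicator {xbar..y n} x) \<partial>lborel)
          \<le> ennreal (p powr p) * (\<integral>\<^sup>+x. ennreal (Qf x * indicator R x) \<partial>lborel)" .
    qed simp
  qed
  have partL: "(\<integral>\<^sup>+x. ennreal (Pf x * indicator Lc x) \<partial>lborel)
      \<le> ennreal (p powr p) * (\<integral>\<^sup>+x. ennreal (Qf x * indicator Lo x) \<partial>lborel)"
  proof -
    obtain z :: "nat \<Rightarrow> real" where z: "decseq z" "\<And>i. a < z i" "\<And>i. z i < ereal xbar" "z \<longlonglongrightarrow> a"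
      using ereal_decseq_approx[OF assms(7)] by blast
    have zI: "z i \<in> I" for i using z(2)[of i] z(3)[of i] assms(8) I_iff by (meson less_trans)
    have zx: "z i \<le> xbar" for i using z(3)[of i] by simp
    show ?thesis
    proof (rule exhaust_le[OF Pfm Pfnn, of "\<lambda>n. {z n..xbar}"])
      show "incseq (\<lambda>n. {z n..xbar})" using z(1) by (auto simp: incseq_def decseq_def intro: order_trans)
    next
      fix x assume "x \<in> Lc"
      hence x: "x \<le> xbar" "a < ereal x" by (auto simp: Lc_def I_iff)
      have "eventually (\<lambda>n. ereal (z n) < ereal x) sequentially" by (rule order_tendstoD(2)[OF z(4) x(2)])
      then obtain n where "ereal (z n) < ereal x" by (auto simp: eventually_sequentially)
      hence "x \<in> {z n..xbar}" using x by simp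
      thus "\<exists>n. x \<in> {z n..xbar}" by blast
    next
      fix n
      have sub: "{z n..<xbar} \<subseteq> Lo" using ccI[OF zI[of n] xbarI] by (auto simp: Lo_def)
      have "(\<integral>\<^sup>+x. ennreal (Pf x * indicator {z n..xbar} x) \<partial>lborel)
          \<le> ennreal (p powr p) * (\<integral>\<^sup>+x. ennreal (Qf x * indicator {z n..xbar} x) \<partial>lborel)"
        by (rule segL[OF zx zI])
      also have "(\<integral>\<^sup>+x. ennreal (Qf x * indicator {z n..xbar} x) \<partial>lborel) = (\<integral>\<^sup>+x. ennreal (Qf x * indicator {z n..<xbar} x) \<partial>lborel)"
        by (intro nn_integral_cong_AE eventually_mono[OF AE_lborel_singleton[of xbar]]) (auto split: split_indicator)
      also have "ennreal (p powr p) * \<dots> \<le> ennreal (p powr p) * (\<integral>\<^sup>+x. ennreal (Qf x * indicator Lo x) \<partial>lborel)"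
        using sub Qfnn by (intro mult_left_mono nn_integral_mono ennreal_leI) (auto split: split_indicator)
      finally show "(\<integral>\<^sup>+x. ennreal (Pf x * indicator {z n..xbar} x) \<partial>lborel)
          \<le> ennreal (p powr p) * (\<integral>\<^sup>+x. ennreal (Qf x * indicator Lo x) \<partial>lborel)" .
    qed simp
  qed
  have key: "(\<integral>\<^sup>+x. ennreal (Pf x) \<partial>lborel) \<le> ennreal (p powr p) * (\<integral>\<^sup>+x. ennreal (Qf x) \<partial>lborel)"
  proof -
    have "(\<integral>\<^sup>+x. ennreal (Pf x) \<partial>lborel) \<le> (\<integral>\<^sup>+x. ennreal (Pf x * indicator Lc x) + ennreal (Pf x * indicator R x) \<partial>lborel)"
    proof (rule nn_integral_mono)
      fix x
      show "ennreal (Pf x) \<le> ennreal (Pf x * indicator Lc x) + ennreal (Pf x * indicator R x)"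
      proof (cases "x \<in> I")
        case True
        show ?thesis
        proof (cases "x \<le> xbar")
          case True
          hence "x \<in> Lc" using \<open>x \<in> I\<close> by (simp add: Lc_def)
          thus ?thesis by simp
        next
          case False
          hence "x \<in> R" using \<open>x \<in> I\<close> by (simp add: R_def)
          thus ?thesis by simp
        qed
      qed (simp add: Pf0)
    qed
    also have "\<dots> = (\<integral>\<^sup>+x. ennreal (Pf x * indicator Lc x) \<partial>lborel) + (\<integral>\<^sup>+x. ennreal (Pf x * indicator R x) \<partial>lborel)"
      by (rule nn_integral_add) auto
    also have "\<dots> \<le> ennreal (p powr p) * (\<integral>\<^sup>+x. ennreal (Qf x * indicator Lo x) \<partial>lborel) + ennreal (p powr p) * (\<integral>\<^sup>+x. ennreal (Qf x * indicator R x) \<partial>lborel)"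
      by (rule add_mono[OF partL partR])
    also have "\<dots> = ennreal (p powr p) * ((\<integral>\<^sup>+x. ennreal (Qf x * indicator Lo x) \<partial>lborel) + (\<integral>\<^sup>+x. ennreal (Qf x * indicator R x) \<partial>lborel))"
      by (simp add: distrib_left)
    also have "(\<integral>\<^sup>+x. ennreal (Qf x * indicator Lo x) \<partial>lborel) + (\<integral>\<^sup>+x. ennreal (Qf x * indicator R x) \<partial>lborel)
        = (\<integral>\<^sup>+x. ennreal (Qf x * indicator Lo x) + ennreal (Qf x * indicator R x) \<partial>lborel)"
      by (rule nn_integral_add[symmetric]) auto
    also have "\<dots> \<le> (\<integral>\<^sup>+x. ennreal (Qf x) \<partial>lborel)"
    proof (rule nn_integral_mono)
      fix x
      have "\<not> (x \<in> Lo \<and> x \<in> R)" by (auto simp: Lo_def R_def)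
      thus "ennreal (Qf x * indicator Lo x) + ennreal (Qf x * indicator R x) \<le> ennreal (Qf x)"
        by (auto split: split_indicator)
    qed
    finally show ?thesis by (simp add: mult_left_mono)
  qed
  have AEI: "AE \<omega> in M. X \<omega> \<in> I"
  proof (rule AE_I'[where N="X -` (- I) \<inter> space M"])
    show "{\<omega> \<in> space M. \<not> X \<omega> \<in> I} \<subseteq> X -` (- I) \<inter> space M" by auto
    have eq0: "(\<lambda>x. ennreal (f x) * indicator (- I) x) = (\<lambda>x. 0)"
      by (auto simp: fun_eq_iff f0 split: split_indicator)
    have "emeasure M (X -` (- I) \<inter> space M) = (\<integral>\<^sup>+x. ennreal (f x) * indicator (- I) x \<partial>lborel)"
      by (rule distributed_emeasure[OF dist]) simp
    hence "emeasure M (X -` (- I) \<inter> space M) = 0" unfolding eq0 by simp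
    moreover have "X -` (- I) \<inter> space M \<in> sets M" by measurable
    ultimately show "X -` (- I) \<inter> space M \<in> null_sets M" by (rule null_setsI)
  qed
  have step1: "(\<integral>\<^sup>+\<omega>. ennreal (\<bar>\<phi> (X \<omega>) - (\<integral>\<omega>'. \<phi> (X \<omega>') \<partial>M)\<bar> powr p) \<partial>M)
      \<le> ennreal (2 powr p) * (\<integral>\<^sup>+\<omega>. ennreal (\<bar>\<phi> (X \<omega>) - c\<bar> powr p) \<partial>M)"
    by (rule center[OF P assms(12) p1 assms(13)])
  have step2: "(\<integral>\<^sup>+\<omega>. ennreal (\<bar>\<phi> (X \<omega>) - c\<bar> powr p) \<partial>M) = (\<integral>\<^sup>+x. ennreal (Pf x) \<partial>lborel)"
  proof -
    have "(\<integral>\<^sup>+\<omega>. ennreal (\<bar>\<phi> (X \<omega>) - c\<bar> powr p) \<partial>M) = (\<integral>\<^sup>+\<omega>. ennreal (\<bar>phih (X \<omega>) - c\<bar> powr p) \<partial>M)"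
      by (intro nn_integral_cong_AE eventually_mono[OF AEI]) (simp add: phih_def)
    also have "\<dots> = (\<integral>\<^sup>+x. ennreal (f x) * ennreal (\<bar>phih x - c\<bar> powr p) \<partial>lborel)"
      by (rule distributed_nn_integral[OF dist, symmetric]) measurable
    also have "\<dots> = (\<integral>\<^sup>+x. ennreal (Pf x) \<partial>lborel)"
      by (intro nn_integral_cong) (simp add: Pf_def ennreal_mult fnn)
    finally show ?thesis .
  qed
  have step3: "(\<integral>\<^sup>+\<omega>. ennreal (K_weight a f xbar (X \<omega>) powr p * \<bar>deriv \<phi> (X \<omega>)\<bar> powr p) \<partial>M)
      = (\<integral>\<^sup>+x. ennreal (Qf x) \<partial>lborel)"
  proof -
    have "(\<integral>\<^sup>+\<omega>. ennreal (K_weight a f xbar (X \<omega>) powr p * \<bar>deriv \<phi> (X \<omega>)\<bar> powr p) \<partial>M)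
        = (\<integral>\<^sup>+\<omega>. ennreal (Kh (X \<omega>) powr p * \<bar>Dh (X \<omega>)\<bar> powr p) \<partial>M)"
      by (intro nn_integral_cong_AE eventually_mono[OF AEI]) (simp add: Dh_def KhK)
    also have "\<dots> = (\<integral>\<^sup>+x. ennreal (f x) * ennreal (Kh x powr p * \<bar>Dh x\<bar> powr p) \<partial>lborel)"
      by (rule distributed_nn_integral[OF dist, symmetric]) measurable
    also have "\<dots> = (\<integral>\<^sup>+x. ennreal (Qf x) \<partial>lborel)"
      by (intro nn_integral_cong) (simp add: Qf_def ennreal_mult fnn)
    finally show ?thesis .
  qed
  have pw: "ennreal ((2 * p) powr p) = ennreal (2 powr p) * ennreal (p powr p)"
    using p0 by (simp add: powr_mult ennreal_mult)
  show ?thesis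
    unfolding step3 pw
    using step1 step2 key
    by (metis (no_types, lifting) mult.assoc mult_left_mono order_trans zero_le)
qed

end
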